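(* Let $L$ be a homogeneous second-order Lagrangian with fundamental form $\Theta$. If $\Theta$ is projectable to $J^4_+(E,2)$, then, in any local coordinates, $\displaystyle\sum_{\alpha,\beta}\frac{\partial^2L}{\partial u^\beta_{11}\,\partial u^\alpha_{21}}\,du^\beta\wedge du^\alpha=0,$ i.e. $\frac{\partial^2L}{\partial u^\beta_{11}\partial u^\alpha_{12}}=\frac{\partial^2L}{\partial u^\alpha_{11}\partial u^\beta_{12}}$ for all $\alpha,\beta$.
   Context: Let $E$ be a smooth manifold of dimension $n$ with local coordinates $(u^\alpha)$. For $k\ge 1$, $\mathcal F^k_{(2)}E$ denotes the bundle of $k$-th order 2-frames in $E$ (regular $k$-th order 2-velocities, i.e. $k$-jets at $0$ of maps $\mathbb R^2\to E$ of rank 2 at $0$), with induced coordinates $u^\alpha_{i_1\cdots i_s}$ ($0\le s\le k$, indices in $\{1,2\}$, totally symmetric in the subscripts). Pull-backs along the projections $\mathcal F^l_{(2)}E\to\mathcal F^k_{(2)}E$ are omitted. $\#(i_1\cdots i_s)$ denotes the number of distinct rearrangements of $(i_1,\dots,i_s)$; repeated indices in $\{1,2\}$ are summed. The total derivatives are the vector fields along $\mathcal F^{k+1}_{(2)}E\to\mathcal F^k_{(2)}E$ given by $\mathbf T_i=\sum_{s=0}^k \frac{1}{\#(i_1\cdots i_s)}u^\alpha_{i i_1\cdots i_s}\,\partial/\partial u^\alpha_{i_1\cdots i_s}$, and the vertical endomorphisms are the type $(1,1)$ tensor fields on $\mathcal F^{k+1}_{(2)}E$ given by $S^j=\sum_{s=0}^k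 \frac{s+1}{\#(i_1\cdots i_s)}\,\partial/\partial u^\alpha_{j i_1\cdots i_s}\otimes du^\alpha_{i_1\cdots i_s}$. The $S^i$ commute and $S^{i_1\cdots i_s}$ denotes their composite. On forms, $S^i$ acts as the degree-zero derivation $(S^i\omega)(X_1,\dots,X_r)=\sum_a \omega(X_1,\dots,S^iX_a,\dots,X_r)$ (zero on functions). The fundamental vector fields are $\Delta^{i_1\cdots i_s}_i=S^{i_1\cdots i_s}(\mathbf T_i)$, well-defined vector fields on $\mathcal F^{k+1}_{(2)}E$. Contraction with $\mathbf T_i$ and with $\Delta^{i_1\cdots i_s}_i$ is denoted $i_i$ and $i^{i_1\cdots i_s}_i$; the corresponding Lie derivatives are $d_i=d\,i_i+i_i\,d$ and $d^{i_1\cdots i_s}_i=d\,i^{i_1\cdots i_s}_i+i^{i_1\cdots i_s}_i d$. The $d_i$ commute and $d_{j_1\cdots j_s}$ denotes their composite. A second-order Lagrangian is a smooth function $L$ on (an open subset of) $\mathcal F^2_{(2)}E$; it is homogeneous if $d^i_jL=\delta^i_jL$ and $d^{ik}_jL=0$ for all $i,j,k$. Its Hilbert forms are the 1-forms $\vartheta^i=(S^i-\tfrac12 d_jS^{ji})\,dL$ on $\mathcal F^3_{(2)}E$. Define the operators $P^i_{(1)}=\tfrac14 S^i-\tfrac1{24}d_jS^{ji}+\tfrac1{192}d_{jk}S^{jki}$, mapping 2-forms on $\mathcal F^3_{(2)}E$ to 2-forms on $\mathcal F^5_{(2)}E$. The fundamental form of $L$ is the 2-form $\Theta=P^2_{(1)}d\vartheta^1-P^1_{(1)}d\vartheta^2$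 on $\mathcal F^5_{(2)}E$; it is the pull-back of a 2-form on $\mathcal F^4_{(2)}E$. $J^4_+(E,2)$ is the manifold of oriented fourth-order 2-dimensional contact elements of $E$, the quotient of $\mathcal F^4_{(2)}E$ by reparametrizations, whose fibres are generated by the fundamental vector fields; a form on $\mathcal F^4_{(2)}E$ is projectable to $J^4_+(E,2)$ exactly when its contractions $i^p_l,i^{pq}_l,i^{pqr}_l,i^{pqrs}_l$ and its Lie derivatives $d^p_l,d^{pq}_l,d^{pqr}_l,d^{pqrs}_l$ all vanish, for all indices. *)

theory Defs
  imports "HOL-Analysis.Analysis"
begin

text \<open>Coordinate model of the jet towers of 2-frames over a chart of E.
  A coordinate u^alpha_I is encoded as (alpha, a, b), where the symmetric
  multi-index I over {1,2} contains a ones and b twos; alpha ranges over a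
  finite type 'a (so n = CARD('a)).  A point is an assignment of real values
  to all coordinates (pull-backs along the projections are implicit).
  Forms are given by coefficient functions: a 1-form w is sum w_c du_c,
  a 2-form W satisfies W(d/du_c, d/du_c') = W c c' (antisymmetric),
  a 3-form similarly.  Vector fields are sum X_c d/du_c.\<close>

type_synonym 'a crd = "'a \<times> nat \<times> nat"
type_synonym 'a pt = "'a crd \<Rightarrow> real"
type_synonym 'a fn = "'a pt \<Rightarrow> real"
type_synonym 'a vf = "'a crd \<Rightarrow> 'a fn"
type_synonym 'a form1 = "'a crd \<Rightarrow> 'a fn"
type_synonym 'a form2 = "'a crd \<Rightarrow> 'a crd \<Rightarrow> 'a fn"
type_synonym 'a form3 = "'a crd \<Rightarrow> 'a crd \<Rightarrow> 'a crd \<Rightarrow> 'a fn"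

definition crd_ord :: "'a crd \<Rightarrow> nat" where
  "crd_ord c = fst (snd c) + snd (snd c)"

text \<open>Truncation order: all forms occurring have coordinate support of order
  at most 5, so summing over coordinates of order at most 6 is exact.\<close>
definition Ntr :: nat where "Ntr = 6"

definition crds :: "'a crd set" where
  "crds = {c. crd_ord c \<le> Ntr}"

definition upi :: "nat \<Rightarrow> 'a crd \<Rightarrow> 'a crd" where
  "upi j c = (if j = 1 then (fst c, Suc (fst (snd c)), snd (snd c))
              else (fst c, fst (snd c), Suc (snd (snd c))))"

definition pd :: "'a crd \<Rightarrow> 'a fn \<Rightarrow> 'a fn" where
  "pd c f p = deriv (\<lambda>t. f (p(c := p c + t))) 0"

fun pds :: "'a crd list \<Rightarrow> 'a fn \<Rightarrow> 'a fn" where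
  "pds [] f = f"
| "pds (c # cs) f = pd c (pds cs f)"

text \<open>Total derivative T_i = sum_I u_{iI} d/du_I (the factor 1/#(I) cancels the
  #(I) ordered rearrangements of I).\<close>
definition TT :: "nat \<Rightarrow> 'a vf" where
  "TT i c p = (if crd_ord c \<le> Ntr then p (upi i c) else 0)"

text \<open>Vertical endomorphism on vector fields: S^j (d/du_I) = (s+1) d/du_{jI}.\<close>
definition Sv :: "nat \<Rightarrow> 'a vf \<Rightarrow> 'a vf" where
  "Sv j X e p = (case e of (\<alpha>, a, b) \<Rightarrow>
     (if j = 1 then (if a = 0 then 0 else real (a + b) * X (\<alpha>, a - 1, b) p)
      else (if b = 0 then 0 else real (a + b) * X (\<alpha>, a, b - 1) p)))"

definition Dl :: "nat \<Rightarrow> nat list \<Rightarrow> 'a vf" where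
  "Dl l J = foldr Sv J (TT l)"

text \<open>Vertical endomorphisms on 1- and 2-forms (degree-zero derivation).\<close>
definition S1 :: "nat \<Rightarrow> 'a form1 \<Rightarrow> 'a form1" where
  "S1 j w c p = real (crd_ord c + 1) * w (upi j c) p"

definition S2 :: "nat \<Rightarrow> 'a form2 \<Rightarrow> 'a form2" where
  "S2 j W c c' p = real (crd_ord c + 1) * W (upi j c) c' p
                 + real (crd_ord c' + 1) * W c (upi j c') p"

definition dd0 :: "'a fn \<Rightarrow> 'a form1" where
  "dd0 f c = pd c f"

definition dd1 :: "'a form1 \<Rightarrow> 'a form2" where
  "dd1 w c c' p = pd c (w c') p - pd c' (w c) p"

definition dd2 :: "'a form2 \<Rightarrow> 'a form3" where
  "dd2 W a b c p = pd a (W b c) p - pd b (W a c) p + pd c (W a b) p"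

definition ic1 :: "'a::finite vf \<Rightarrow> 'a form1 \<Rightarrow> 'a fn" where
  "ic1 X w p = (\<Sum>a\<in>crds. X a p * w a p)"

definition ic2 :: "'a::finite vf \<Rightarrow> 'a form2 \<Rightarrow> 'a form1" where
  "ic2 X W c p = (\<Sum>a\<in>crds. X a p * W a c p)"

definition ic3 :: "'a::finite vf \<Rightarrow> 'a form3 \<Rightarrow> 'a form2" where
  "ic3 X W b c p = (\<Sum>a\<in>crds. X a p * W a b c p)"

definition lie0 :: "'a::finite vf \<Rightarrow> 'a fn \<Rightarrow> 'a fn" where
  "lie0 X f = ic1 X (dd0 f)"

definition lie1 :: "'a::finite vf \<Rightarrow> 'a form1 \<Rightarrow> 'a form1" where
  "lie1 X w c p = dd0 (ic1 X w) c p + ic2 X (dd1 w) c p"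

definition lie2 :: "'a::finite vf \<Rightarrow> 'a form2 \<Rightarrow> 'a form2" where
  "lie2 X W c c' p = dd1 (ic2 X W) c c' p + ic3 X (dd2 W) c c' p"

definition hilbert :: "nat \<Rightarrow> 'a::finite fn \<Rightarrow> 'a form1" where
  "hilbert i L c p = S1 i (dd0 L) c p
     - 1/2 * (\<Sum>j\<in>{1,2::nat}. lie1 (TT j) (S1 j (S1 i (dd0 L))) c p)"

definition Pop :: "nat \<Rightarrow> 'a::finite form2 \<Rightarrow> 'a form2" where
  "Pop i W c c' p = 1/4 * S2 i W c c' p
     - 1/24 * (\<Sum>j\<in>{1,2::nat}. lie2 (TT j) (S2 j (S2 i W)) c c' p)
     + 1/192 * (\<Sum>j\<in>{1,2::nat}. \<Sum>k\<in>{1,2::nat}.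
          lie2 (TT j) (lie2 (TT k) (S2 j (S2 k (S2 i W)))) c c' p)"

definition fundamental_form :: "'a::finite fn \<Rightarrow> 'a form2" where
  "fundamental_form L c c' p =
     Pop 2 (dd1 (hilbert 1 L)) c c' p - Pop 1 (dd1 (hilbert 2 L)) c c' p"

text \<open>Domain: open subset of F^2_(2)E (lifted to the tower): open, determined
  by coordinates of order at most 2, consisting of regular 2-frames.\<close>
definition frame_domain :: "'a pt set \<Rightarrow> bool" where
  "frame_domain D \<longleftrightarrow> open D
     \<and> (\<forall>p q. (\<forall>c. crd_ord c \<le> 2 \<longrightarrow> p c = q c) \<longrightarrow> (p \<in> D \<longleftrightarrow> q \<in> D))
     \<and> (\<forall>p\<in>D. \<exists>\<alpha> \<beta>. p (\<alpha>,1,0) * p (\<beta>,0,1) - p (\<beta>,1,0) * p (\<alpha>,0,1) \<noteq> 0)"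

definition lagrangian2 :: "'a pt set \<Rightarrow> 'a fn \<Rightarrow> bool" where
  "lagrangian2 D L \<longleftrightarrow>
     (\<forall>p\<in>D. \<forall>q\<in>D. (\<forall>c. crd_ord c \<le> 2 \<longrightarrow> p c = q c) \<longrightarrow> L p = L q)
     \<and> (\<forall>cs. continuous_on D (pds cs L)
          \<and> (\<forall>p\<in>D. \<forall>c. (\<lambda>t. pds cs L (p(c := p c + t))) differentiable (at 0)))"

definition homogeneous :: "'a::finite pt set \<Rightarrow> 'a fn \<Rightarrow> bool" where
  "homogeneous D L \<longleftrightarrow> (\<forall>i\<in>{1,2}. \<forall>j\<in>{1,2}. \<forall>k\<in>{1,2}. \<forall>p\<in>D.
      lie0 (Dl j [i]) L p = (if i = j then L p else 0)
    \<and> lie0 (Dl j [i, k]) L p = 0)"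

definition projectable4 :: "'a::finite pt set \<Rightarrow> 'a form2 \<Rightarrow> bool" where
  "projectable4 D W \<longleftrightarrow> (\<forall>l\<in>{1,2}. \<forall>J. J \<noteq> [] \<and> length J \<le> 4 \<and> set J \<subseteq> {1,2} \<longrightarrow>
      (\<forall>p\<in>D. \<forall>c. ic2 (Dl l J) W c p = 0)
    \<and> (\<forall>p\<in>D. \<forall>c c'. lie2 (Dl l J) W c c' p = 0))"

end

theory Submission
  imports Defs
begin

definition lnf :: "'a fn \<Rightarrow> 'a pt \<Rightarrow> 'a crd \<Rightarrow> real \<Rightarrow> real" where
  "lnf f p c = (\<lambda>t. f (p(c := p c + t)))"

lemma pd_lnf: "pd c f p = deriv (lnf f p c) 0" by (simp add: pd_def lnf_def)

lemma lnf0[simp]: "lnf f p c 0 = f p" by (simp add: lnf_def)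

lemma line_cont: "continuous_on UNIV (\<lambda>t::real. p(c := p c + t))"
  apply (rule continuous_on_coordinatewise_then_product)
  subgoal for i by (cases "i = c") (auto intro!: continuous_intros)
  done

lemma line_ev: fixes D :: "('b \<Rightarrow> real) set" assumes "open D" "p \<in> D" shows "eventually (\<lambda>t. p(c := p c + t) \<in> D) (nhds 0)"
proof -
  have "open ((\<lambda>t::real. p(c := p c + t)) -` D)"
    using open_vimage[OF assms(1) line_cont] .
  moreover have "0 \<in> (\<lambda>t::real. p(c := p c + t)) -` D" using assms(2) by simp
  ultimately show ?thesis using eventually_nhds_in_open by fastforce
qed

lemma dlnf: "lnf f p c differentiable (at 0) \<Longrightarrow> DERIV (lnf f p c) 0 :> pd c f p"
  by (simp add: pd_lnf DERIV_deriv_iff_real_differentiable)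

lemma pd_from_DERIV: "DERIV (lnf f p c) 0 :> v \<Longrightarrow> pd c f p = v"
  by (simp add: pd_lnf DERIV_imp_deriv)

lemma lnf_mult: "lnf (\<lambda>q. f q * g q) p c = (\<lambda>t. lnf f p c t * lnf g p c t)"
  by (simp add: lnf_def)
lemma lnf_add: "lnf (\<lambda>q. f q + g q) p c = (\<lambda>t. lnf f p c t + lnf g p c t)"
  by (simp add: lnf_def)
lemma lnf_diff: "lnf (\<lambda>q. f q - g q) p c = (\<lambda>t. lnf f p c t - lnf g p c t)"
  by (simp add: lnf_def)
lemma lnf_sum: "lnf (\<lambda>q. \<Sum>a\<in>A. f a q) p c = (\<lambda>t. \<Sum>a\<in>A. lnf (f a) p c t)"
  by (simp add: lnf_def)

lemma pd_mult: assumes "lnf f p c differentiable (at 0)" "lnf g p c differentiable (at 0)"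
  shows "pd c (\<lambda>q. f q * g q) p = pd c f p * g p + f p * pd c g p"
  apply (rule pd_from_DERIV) unfolding lnf_mult
  using DERIV_mult[OF dlnf[OF assms(1)] dlnf[OF assms(2)]] by (simp add: mult.commute)

lemma diff_mult: assumes "lnf f p c differentiable (at 0)" "lnf g p c differentiable (at 0)"
  shows "lnf (\<lambda>q. f q * g q) p c differentiable (at 0)"
  unfolding lnf_mult using assms by (intro derivative_intros)

lemma pd_add: assumes "lnf f p c differentiable (at 0)" "lnf g p c differentiable (at 0)"
  shows "pd c (\<lambda>q. f q + g q) p = pd c f p + pd c g p"
  apply (rule pd_from_DERIV) unfolding lnf_add
  using DERIV_add[OF dlnf[OF assms(1)] dlnf[OF assms(2)]] by simp

lemma diff_add: assumes "lnf f p c differentiable (at 0)" "lnf g p c differentiable (at 0)"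
  shows "lnf (\<lambda>q. f q + g q) p c differentiable (at 0)"
  unfolding lnf_add using assms by (intro derivative_intros)

lemma pd_diff: assumes "lnf f p c differentiable (at 0)" "lnf g p c differentiable (at 0)"
  shows "pd c (\<lambda>q. f q - g q) p = pd c f p - pd c g p"
  apply (rule pd_from_DERIV) unfolding lnf_diff
  using DERIV_diff[OF dlnf[OF assms(1)] dlnf[OF assms(2)]] by simp

lemma diff_diff: assumes "lnf f p c differentiable (at 0)" "lnf g p c differentiable (at 0)"
  shows "lnf (\<lambda>q. f q - g q) p c differentiable (at 0)"
  unfolding lnf_diff using assms by (intro derivative_intros)

lemma pd_sum: assumes "finite A" "\<And>a. a \<in> A \<Longrightarrow> lnf (f a) p c differentiable (at 0)"
  shows "pd c (\<lambda>q. \<Sum>a\<in>A. f a q) p = (\<Sum>a\<in>A. pd c (f a) p)"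
  apply (rule pd_from_DERIV) unfolding lnf_sum
  using DERIV_sum[where f="\<lambda>t a. lnf (f a) p c t" and f'="\<lambda>a. pd c (f a) p", OF dlnf[OF assms(2)]] by simp

lemma diff_sum: assumes "finite A" "\<And>a. a \<in> A \<Longrightarrow> lnf (f a) p c differentiable (at 0)"
  shows "lnf (\<lambda>q. \<Sum>a\<in>A. f a q) p c differentiable (at 0)"
  unfolding lnf_sum using assms by (intro differentiable_sum) auto

lemma lnf_const: "lnf (\<lambda>q. k) p c = (\<lambda>t. k)" by (simp add: lnf_def)
lemma pd_const: "pd c (\<lambda>q. k) p = 0"
  by (rule pd_from_DERIV) (simp add: lnf_const)
lemma diff_const: "lnf (\<lambda>q. k) p c differentiable (at 0)"
  by (simp add: lnf_const)

lemma lnf_coord: "lnf (\<lambda>q. q e) p c = (\<lambda>t. if c = e then p e + t else p e)"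
  by (auto simp: lnf_def)
lemma pd_coord: "pd c (\<lambda>q. q e) p = (if c = e then 1 else 0)"
  by (rule pd_from_DERIV) (auto simp: lnf_coord intro!: derivative_eq_intros)
lemma diff_coord: "lnf (\<lambda>q. q e) p c differentiable (at 0)"
  by (cases "c = e") (auto simp: lnf_coord intro!: derivative_intros)

declare split_paired_All [simp del]

fun Pn :: "'a pt set \<Rightarrow> nat \<Rightarrow> 'a fn \<Rightarrow> bool" where
  "Pn D 0 f = (\<forall>p\<in>D. \<forall>c. lnf f p c differentiable (at 0))"
| "Pn D (Suc n) f = ((\<forall>p\<in>D. \<forall>c. lnf f p c differentiable (at 0)) \<and> (\<forall>c. Pn D n (pd c f)))"

definition sm :: "'a pt set \<Rightarrow> 'a fn \<Rightarrow> bool" where "sm D f \<longleftrightarrow> (\<forall>n. Pn D n f)"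

definition eqD :: "'a pt set \<Rightarrow> 'a fn \<Rightarrow> 'a fn \<Rightarrow> bool" where
  "eqD D f g \<longleftrightarrow> (\<forall>q\<in>D. f q = g q)"

locale dom =
  fixes D :: "'a::finite pt set"
  assumes openD: "open D"
    and detD: "\<And>p q. (\<forall>c. crd_ord c \<le> 2 \<longrightarrow> p c = q c) \<Longrightarrow> p \<in> D \<longleftrightarrow> q \<in> D"
begin

lemma ev_eq: assumes "eqD D f g" "p \<in> D"
  shows "eventually (\<lambda>t. lnf f p c t = lnf g p c t) (nhds 0)"
  using line_ev[OF openD assms(2), of c] assms(1) unfolding eqD_def lnf_def
  by (auto elim: eventually_mono)

lemma pd_cong: assumes "eqD D f g" "p \<in> D" shows "pd c f p = pd c g p"
  unfolding pd_lnf by (rule deriv_cong_ev[OF ev_eq[OF assms] refl])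

lemma lined_cong: assumes "eqD D f g" "p \<in> D" "lnf f p c differentiable (at 0)"
  shows "lnf g p c differentiable (at 0)"
proof -
  have "DERIV (lnf f p c) 0 :> pd c f p" using dlnf[OF assms(3)] .
  then have "DERIV (lnf g p c) 0 :> pd c f p"
    using DERIV_cong_ev[OF refl ev_eq[OF assms(1,2)] refl] by simp
  then show ?thesis using real_differentiable_def by blast
qed

lemma eqD_pd: "eqD D f g \<Longrightarrow> eqD D (pd c f) (pd c g)"
  using pd_cong unfolding eqD_def by blast

lemma Pn_cong: "Pn D n f \<Longrightarrow> eqD D f g \<Longrightarrow> Pn D n g"
proof (induction n arbitrary: f g)
  case 0 then show ?case using lined_cong by auto
next
  case (Suc n) then show ?case using lined_cong eqD_pd by (metis Pn.simps(2))
qed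

lemma Pn_mono: "Pn D (Suc n) f \<Longrightarrow> Pn D n f"
  by (induction n arbitrary: f) auto

lemma Pn_lined: "Pn D n f \<Longrightarrow> p \<in> D \<Longrightarrow> lnf f p c differentiable (at 0)"
  by (cases n) (auto simp del: split_paired_All)

lemma Pn_add: "Pn D n f \<Longrightarrow> Pn D n g \<Longrightarrow> Pn D n (\<lambda>q. f q + g q)"
proof (induction n arbitrary: f g)
  case 0 then show ?case by (auto intro: diff_add)
next
  case (Suc n)
  show ?case
  proof (simp only: Pn.simps, intro conjI allI ballI)
    show "lnf (\<lambda>q. f q + g q) p c differentiable at 0" if "p \<in> D" for p c
      using Suc.prems that by (auto intro: diff_add simp del: split_paired_All)
    fix c
    have "eqD D (\<lambda>q. pd c f q + pd c g q) (pd c (\<lambda>q. f q + g q))"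
      unfolding eqD_def using Suc.prems by (auto intro!: pd_add[symmetric])
    moreover have "Pn D n (\<lambda>q. pd c f q + pd c g q)" using Suc by auto
    ultimately show "Pn D n (pd c (\<lambda>q. f q + g q))" using Pn_cong by blast
  qed
qed

lemma pd_const_fun: "pd c (\<lambda>q. k) = (\<lambda>q. 0)" using pd_const by (rule ext)

lemma Pn_const: "Pn D n (\<lambda>q. k)"
  by (induction n arbitrary: k) (auto simp: pd_const_fun diff_const)

lemma Pn_mult: "Pn D n f \<Longrightarrow> Pn D n g \<Longrightarrow> Pn D n (\<lambda>q. f q * g q)"
proof (induction n arbitrary: f g)
  case 0 then show ?case by (auto intro: diff_mult)
next
  case (Suc n)
  show ?case
  proof (simp only: Pn.simps, intro conjI allI ballI)
    show "lnf (\<lambda>q. f q * g q) p c differentiable at 0" if "p \<in> D" for p c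
      using Suc.prems that by (auto intro: diff_mult simp del: split_paired_All)
    fix c
    have "eqD D (\<lambda>q. pd c f q * g q + f q * pd c g q) (pd c (\<lambda>q. f q * g q))"
      unfolding eqD_def using Suc.prems by (auto intro!: pd_mult[symmetric])
    moreover have "Pn D n (\<lambda>q. pd c f q * g q + f q * pd c g q)"
      using Suc Pn_mono by (intro Pn_add) auto
    ultimately show "Pn D n (pd c (\<lambda>q. f q * g q))" using Pn_cong by blast
  qed
qed

lemma Pn_sum: "finite A \<Longrightarrow> (\<And>a. a \<in> A \<Longrightarrow> Pn D n (f a)) \<Longrightarrow> Pn D n (\<lambda>q. \<Sum>a\<in>A. f a q)"
proof (induction A rule: finite_induct)
  case empty then show ?case using Pn_const by simp
next
  case (insert x F)
  then show ?case using Pn_add[of n "f x" "\<lambda>q. \<Sum>a\<in>F. f a q"] by simp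
qed

lemma pd_coord_fun: "pd c (\<lambda>q. q e) = (\<lambda>q. if c = e then 1 else 0)"
  using pd_coord by (rule ext)

lemma Pn_coord: "Pn D n (\<lambda>q. q e)"
  by (cases n) (auto simp: pd_coord_fun diff_coord Pn_const)

lemma Pn_pd: "Pn D (Suc n) f \<Longrightarrow> Pn D n (pd c f)" by (simp del: split_paired_All)

lemma sm_add: "sm D f \<Longrightarrow> sm D g \<Longrightarrow> sm D (\<lambda>q. f q + g q)"
  unfolding sm_def using Pn_add by blast
lemma sm_mult: "sm D f \<Longrightarrow> sm D g \<Longrightarrow> sm D (\<lambda>q. f q * g q)"
  unfolding sm_def using Pn_mult by blast
lemma sm_const: "sm D (\<lambda>q. k)"
  unfolding sm_def using Pn_const by blast
lemma sm_coord: "sm D (\<lambda>q. q e)"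
  unfolding sm_def using Pn_coord by blast
lemma sm_sum: "finite A \<Longrightarrow> (\<And>a. a \<in> A \<Longrightarrow> sm D (f a)) \<Longrightarrow> sm D (\<lambda>q. \<Sum>a\<in>A. f a q)"
  unfolding sm_def using Pn_sum by blast
lemma sm_pd: "sm D f \<Longrightarrow> sm D (pd c f)"
  unfolding sm_def using Pn_pd by (metis Pn.simps(2))
lemma sm_lined: "sm D f \<Longrightarrow> p \<in> D \<Longrightarrow> lnf f p c differentiable (at 0)"
  unfolding sm_def using Pn_lined by blast
lemma sm_cmult: "sm D f \<Longrightarrow> sm D (\<lambda>q. k * f q)"
  using sm_mult[OF sm_const] by blast
lemma sm_diff: "sm D f \<Longrightarrow> sm D g \<Longrightarrow> sm D (\<lambda>q. f q - g q)"
proof -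
  assume "sm D f" "sm D g"
  then have "sm D (\<lambda>q. f q + (-1) * g q)" by (intro sm_add sm_cmult)
  then show ?thesis by simp
qed
lemma sm_eta: "sm D f \<Longrightarrow> sm D (\<lambda>q. f q)" by simp
lemma sm_if: "sm D f \<Longrightarrow> sm D g \<Longrightarrow> sm D (\<lambda>q. if P then f q else g q)"
  by (cases P) auto
lemma sm_zero: "sm D (\<lambda>q. 0)" by (rule sm_const)

lemmas sm_intros = sm_add sm_mult sm_const sm_coord sm_sum sm_pd sm_cmult sm_diff sm_if

lemma pd_add_sm: "sm D f \<Longrightarrow> sm D g \<Longrightarrow> p \<in> D \<Longrightarrow> pd c (\<lambda>q. f q + g q) p = pd c f p + pd c g p"
  by (intro pd_add sm_lined)
lemma pd_diff_sm: "sm D f \<Longrightarrow> sm D g \<Longrightarrow> p \<in> D \<Longrightarrow> pd c (\<lambda>q. f q - g q) p = pd c f p - pd c g p"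
  by (intro pd_diff sm_lined)
lemma pd_mult_sm: "sm D f \<Longrightarrow> sm D g \<Longrightarrow> p \<in> D \<Longrightarrow> pd c (\<lambda>q. f q * g q) p = pd c f p * g p + f p * pd c g p"
  by (intro pd_mult sm_lined)
lemma pd_sum_sm: "finite A \<Longrightarrow> (\<And>a. a \<in> A \<Longrightarrow> sm D (f a)) \<Longrightarrow> p \<in> D \<Longrightarrow>
    pd c (\<lambda>q. \<Sum>a\<in>A. f a q) p = (\<Sum>a\<in>A. pd c (f a) p)"
  by (intro pd_sum sm_lined) auto
lemma pd_cmult_sm: "sm D f \<Longrightarrow> p \<in> D \<Longrightarrow> pd c (\<lambda>q. k * f q) p = k * pd c f p"
  using pd_mult_sm[OF sm_const, of f p c k] by (simp add: pd_const)

end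

lemma sq_small: fixes s t r :: real assumes "r > 0" "\<bar>s\<bar> < r/2" "\<bar>t\<bar> < r/2"
  shows "dist (s,t) (0,0) < r"
proof -
  have "s^2 < (r/2)^2" using power_strict_mono[of "\<bar>s\<bar>" "r/2" 2] assms by simp
  then have a: "s^2 * 4 < r^2" by (simp add: power_divide)
  have "t^2 < (r/2)^2" using power_strict_mono[of "\<bar>t\<bar>" "r/2" 2] assms by simp
  then have b: "t^2 * 4 < r^2" by (simp add: power_divide)
  have "s^2 + t^2 < r^2" using a b zero_le_power2[of s] zero_le_power2[of t] by linarith
  then have "sqrt (s^2 + t^2) < sqrt (r^2)" by (rule real_sqrt_less_mono)
  then show ?thesis using assms(1) by (simp add: dist_Pair_Pair)
qed

lemma box_in: fixes U :: "('b \<Rightarrow> real) set" assumes "open U" "p \<in> U"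
  shows "\<exists>r>0. \<forall>s t. \<bar>s\<bar> < r \<longrightarrow> \<bar>t\<bar> < r \<longrightarrow> p(e := p e + s, f := p f + t) \<in> U"
proof -
  let ?Q = "\<lambda>x::real\<times>real. p(e := p e + fst x, f := p f + snd x)"
  have cont: "continuous_on UNIV ?Q"
    apply (rule continuous_on_coordinatewise_then_product)
    subgoal for i by (cases "i = f"; cases "i = e") (auto intro!: continuous_intros)
    done
  have "open (?Q -` U)" using open_vimage[OF assms(1) cont] .
  moreover have "(0,0) \<in> ?Q -` U" using assms(2) by simp
  ultimately obtain r0 where r0: "r0 > 0" "ball (0,0) r0 \<subseteq> ?Q -` U"
    using open_contains_ball by blast
  show ?thesis
  proof (intro exI[of _ "r0/2"] conjI allI impI)
    show "r0/2 > 0" using r0 by simp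
    fix s t :: real assume "\<bar>s\<bar> < r0/2" "\<bar>t\<bar> < r0/2"
    then have "dist (s,t) (0,0) < r0" using sq_small r0 by blast
    then have "(s,t) \<in> ball (0,0) r0" by (simp add: dist_commute)
    then show "p(e := p e + s, f := p f + t) \<in> U" using r0 by auto
  qed
qed

context dom begin

lemma deriv_along_e:
  assumes "e \<noteq> f" "sm D g" "p(e := p e + s, f := p f + t) \<in> D"
  shows "DERIV (\<lambda>s. g (p(e := p e + s, f := p f + t))) s :> pd e g (p(e := p e + s, f := p f + t))"
proof -
  let ?Q = "p(e := p e + s, f := p f + t)"
  have "DERIV (lnf g ?Q e) 0 :> pd e g ?Q" by (rule dlnf[OF sm_lined[OF assms(2,3)]])
  moreover have "lnf g ?Q e = (\<lambda>u. g (p(e := p e + (u + s), f := p f + t)))"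
    using assms(1) by (auto simp: lnf_def fun_upd_twist algebra_simps intro!: ext arg_cong[where f=g])
  ultimately have "DERIV (\<lambda>u. (\<lambda>s. g (p(e := p e + s, f := p f + t))) (u + s)) 0 :> pd e g ?Q"
    by simp
  then show ?thesis using DERIV_shift[where x=0 and z=s] by simp
qed

lemma deriv_along_f:
  assumes "e \<noteq> f" "sm D g" "p(e := p e + s, f := p f + t) \<in> D"
  shows "DERIV (\<lambda>t. g (p(e := p e + s, f := p f + t))) t :> pd f g (p(e := p e + s, f := p f + t))"
proof -
  let ?Q = "p(e := p e + s, f := p f + t)"
  have "DERIV (lnf g ?Q f) 0 :> pd f g ?Q" by (rule dlnf[OF sm_lined[OF assms(2,3)]])
  moreover have "lnf g ?Q f = (\<lambda>u. g (p(e := p e + s, f := p f + (u + t))))"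
    using assms(1) by (auto simp: lnf_def algebra_simps intro!: ext arg_cong[where f=g])
  ultimately have "DERIV (\<lambda>u. (\<lambda>t. g (p(e := p e + s, f := p f + t))) (u + t)) 0 :> pd f g ?Q"
    by simp
  then show ?thesis using DERIV_shift[where x=0 and z=t] by simp
qed

lemma schwarz:
  assumes pD: "p \<in> D" and g: "sm D g"
    and c1: "continuous_on D (pd f (pd e g))" and c2: "continuous_on D (pd e (pd f g))"
  shows "pd f (pd e g) p = pd e (pd f g) p"
proof (cases "e = f")
  case True then show ?thesis by simp
next
  case ef: False
  let ?P = "\<lambda>s t. p(e := p e + s, f := p f + t)"
  let ?H1 = "pd f (pd e g)" and ?H2 = "pd e (pd f g)"
  have ge: "sm D (pd e g)" and gf: "sm D (pd f g)" using g sm_pd by auto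
  obtain r where r: "r > 0" "\<And>s t. \<bar>s\<bar> < r \<Longrightarrow> \<bar>t\<bar> < r \<Longrightarrow> ?P s t \<in> D"
    using box_in[OF openD pD] by blast
  have key: "\<exists>s1 t1 s2 t2. 0 < s1 \<and> s1 < h \<and> 0 < t1 \<and> t1 < h \<and> 0 < s2 \<and> s2 < h \<and> 0 < t2 \<and> t2 < h
      \<and> ?H1 (?P s1 t1) = ?H2 (?P s2 t2)" if h: "0 < h" "h < r" for h
  proof -
    have inD: "?P s t \<in> D" if "0 \<le> s" "s \<le> h" "0 \<le> t" "t \<le> h" for s t
      using r(2)[of s t] that h by auto
    define \<Delta> where "\<Delta> = g (?P h h) - g (?P h 0) - g (?P 0 h) + g (?P 0 0)"
    have d1: "DERIV (\<lambda>s. g (?P s h) - g (?P s 0)) s :> pd e g (?P s h) - pd e g (?P s 0)"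
      if "0 \<le> s" "s \<le> h" for s
      using that h by (intro DERIV_diff deriv_along_e[OF ef g] inD) auto
    obtain s1 where s1: "0 < s1" "s1 < h"
      "(g (?P h h) - g (?P h 0)) - (g (?P 0 h) - g (?P 0 0))
        = (h - 0) * (pd e g (?P s1 h) - pd e g (?P s1 0))"
      using MVT2[OF h(1) d1] by blast
    have d2: "DERIV (\<lambda>t. pd e g (?P s1 t)) t :> ?H1 (?P s1 t)"
      if "0 \<le> t" "t \<le> h" for t
      using that h s1 by (intro deriv_along_f[OF ef ge] inD) auto
    obtain t1 where t1: "0 < t1" "t1 < h"
      "pd e g (?P s1 h) - pd e g (?P s1 0) = (h - 0) * ?H1 (?P s1 t1)"
      using MVT2[OF h(1) d2] by blast
    have d3: "DERIV (\<lambda>t. g (?P h t) - g (?P 0 t)) t :> pd f g (?P h t) - pd f g (?P 0 t)"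
      if "0 \<le> t" "t \<le> h" for t
      using that h by (intro DERIV_diff deriv_along_f[OF ef g] inD) auto
    obtain t2 where t2: "0 < t2" "t2 < h"
      "(g (?P h h) - g (?P 0 h)) - (g (?P h 0) - g (?P 0 0))
        = (h - 0) * (pd f g (?P h t2) - pd f g (?P 0 t2))"
      using MVT2[OF h(1) d3] by blast
    have d4: "DERIV (\<lambda>s. pd f g (?P s t2)) s :> ?H2 (?P s t2)"
      if "0 \<le> s" "s \<le> h" for s
      using that h t2 by (intro deriv_along_e[OF ef gf] inD) auto
    obtain s2 where s2: "0 < s2" "s2 < h"
      "pd f g (?P h t2) - pd f g (?P 0 t2) = (h - 0) * ?H2 (?P s2 t2)"
      using MVT2[OF h(1) d4] by blast
    have "h * (h * ?H1 (?P s1 t1)) = h * (h * ?H2 (?P s2 t2))"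
      using s1(3) t1(3) t2(3) s2(3) by (simp add: algebra_simps)
    then have "?H1 (?P s1 t1) = ?H2 (?P s2 t2)" using h by simp
    then show ?thesis using s1 t1 s2 t2 by blast
  qed
  show ?thesis
  proof (rule ccontr)
    assume ne: "?H1 p \<noteq> ?H2 p"
    define \<epsilon> where "\<epsilon> = \<bar>?H1 p - ?H2 p\<bar> / 2"
    have eps: "\<epsilon> > 0" using ne by (simp add: \<epsilon>_def)
    have "open (?H1 -` ball (?H1 p) \<epsilon> \<inter> D)"
      using c1 openD continuous_on_open_vimage open_ball by blast
    then obtain r1 where r1: "r1 > 0" "\<And>s t. \<bar>s\<bar> < r1 \<Longrightarrow> \<bar>t\<bar> < r1 \<Longrightarrow> ?P s t \<in> ?H1 -` ball (?H1 p) \<epsilon> \<inter> D"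
      using box_in[of "?H1 -` ball (?H1 p) \<epsilon> \<inter> D" p e f] pD eps by auto
    have "open (?H2 -` ball (?H2 p) \<epsilon> \<inter> D)"
      using c2 openD continuous_on_open_vimage open_ball by blast
    then obtain r2 where r2: "r2 > 0" "\<And>s t. \<bar>s\<bar> < r2 \<Longrightarrow> \<bar>t\<bar> < r2 \<Longrightarrow> ?P s t \<in> ?H2 -` ball (?H2 p) \<epsilon> \<inter> D"
      using box_in[of "?H2 -` ball (?H2 p) \<epsilon> \<inter> D" p e f] pD eps by auto
    define h where "h = min r (min r1 r2) / 2"
    have h: "0 < h" "h < r" "h < r1" "h < r2" using r r1 r2 by (auto simp: h_def)
    obtain s1 t1 s2 t2 where st: "0 < s1" "s1 < h" "0 < t1" "t1 < h" "0 < s2" "s2 < h" "0 < t2" "t2 < h"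
      and eq: "?H1 (?P s1 t1) = ?H2 (?P s2 t2)"
      using key[OF h(1,2)] by blast
    have "dist (?H1 (?P s1 t1)) (?H1 p) < \<epsilon>" using r1(2)[of s1 t1] st h by (auto simp: dist_commute)
    moreover have "dist (?H2 (?P s2 t2)) (?H2 p) < \<epsilon>" using r2(2)[of s2 t2] st h by (auto simp: dist_commute)
    ultimately have "\<bar>?H1 p - ?H2 p\<bar> < 2 * \<epsilon>" using eq by (simp add: dist_real_def)
    then show False by (simp add: \<epsilon>_def)
  qed
qed

end

lemma finite_crds: "finite (crds :: ('a::finite) crd set)"
proof -
  have "crds \<subseteq> (UNIV :: 'a set) \<times> {0..Ntr} \<times> {0..Ntr}"
    by (auto simp: crds_def crd_ord_def)
  then show ?thesis by (rule finite_subset) auto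
qed

lemma TT_fun: "TT j c = (\<lambda>p. if crd_ord c \<le> Ntr then p (upi j c) else 0)"
  by (rule ext) (simp add: TT_def)
lemma Sv_fun: "Sv j X (\<alpha>, a, b) = (\<lambda>p. if j = 1 then (if a = 0 then 0 else real (a + b) * X (\<alpha>, a - 1, b) p)
      else (if b = 0 then 0 else real (a + b) * X (\<alpha>, a, b - 1) p))"
  by (rule ext) (simp add: Sv_def)
lemma S1_fun: "S1 j w c = (\<lambda>p. real (crd_ord c + 1) * w (upi j c) p)"
  by (rule ext) (simp add: S1_def)
lemma S2_fun: "S2 j W c c' = (\<lambda>p. real (crd_ord c + 1) * W (upi j c) c' p
                 + real (crd_ord c' + 1) * W c (upi j c') p)"
  by (rule ext) (simp add: S2_def)
lemma dd0_fun: "dd0 f c = pd c f" by (simp add: dd0_def)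
lemma dd1_fun: "dd1 w c c' = (\<lambda>p. pd c (w c') p - pd c' (w c) p)"
  by (rule ext) (simp add: dd1_def)
lemma dd2_fun: "dd2 W a b c = (\<lambda>p. pd a (W b c) p - pd b (W a c) p + pd c (W a b) p)"
  by (rule ext) (simp add: dd2_def)
lemma ic1_fun: "ic1 X w = (\<lambda>p. \<Sum>a\<in>crds. X a p * w a p)"
  by (rule ext) (simp add: ic1_def)
lemma ic2_fun: "ic2 X W c = (\<lambda>p. \<Sum>a\<in>crds. X a p * W a c p)"
  by (rule ext) (simp add: ic2_def)
lemma ic3_fun: "ic3 X W b c = (\<lambda>p. \<Sum>a\<in>crds. X a p * W a b c p)"
  by (rule ext) (simp add: ic3_def)
lemma lie0_fun: "lie0 X f = ic1 X (dd0 f)" by (simp add: lie0_def)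
lemma lie1_fun: "lie1 X w c = (\<lambda>p. dd0 (ic1 X w) c p + ic2 X (dd1 w) c p)"
  by (rule ext) (simp add: lie1_def)
lemma lie2_fun: "lie2 X W c c' = (\<lambda>p. dd1 (ic2 X W) c c' p + ic3 X (dd2 W) c c' p)"
  by (rule ext) (simp add: lie2_def)
lemma hilbert_fun: "hilbert i L c = (\<lambda>p. S1 i (dd0 L) c p
     - 1/2 * (\<Sum>j\<in>{1,2::nat}. lie1 (TT j) (S1 j (S1 i (dd0 L))) c p))"
  by (rule ext) (simp add: hilbert_def)
lemma Pop_fun: "Pop i W c c' = (\<lambda>p. 1/4 * S2 i W c c' p
     - 1/24 * (\<Sum>j\<in>{1,2::nat}. lie2 (TT j) (S2 j (S2 i W)) c c' p)
     + 1/192 * (\<Sum>j\<in>{1,2::nat}. \<Sum>k\<in>{1,2::nat}.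
          lie2 (TT j) (lie2 (TT k) (S2 j (S2 k (S2 i W)))) c c' p))"
  by (rule ext) (simp add: Pop_def)
lemma ff_fun: "fundamental_form L c c' =
   (\<lambda>p. Pop 2 (dd1 (hilbert 1 L)) c c' p - Pop 1 (dd1 (hilbert 2 L)) c c' p)"
  by (rule ext) (simp add: fundamental_form_def)

context dom begin

definition smv :: "('a crd \<Rightarrow> 'a fn) \<Rightarrow> bool" where "smv X \<longleftrightarrow> (\<forall>c. sm D (X c))"
definition sm2 :: "'a form2 \<Rightarrow> bool" where "sm2 W \<longleftrightarrow> (\<forall>c c'. sm D (W c c'))"
definition sm3 :: "'a form3 \<Rightarrow> bool" where "sm3 W \<longleftrightarrow> (\<forall>a b c. sm D (W a b c))"

lemma smv_TT: "smv (TT j)"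
  unfolding smv_def TT_fun by (auto intro!: sm_intros)

lemma smv_Sv: "smv X \<Longrightarrow> smv (Sv j X)"
  unfolding smv_def
proof (intro allI)
  fix e :: "'a crd" assume X: "\<forall>c. sm D (X c)"
  obtain \<alpha> a b where e: "e = (\<alpha>, a, b)" by (cases e) auto
  show "sm D (Sv j X e)" unfolding e Sv_fun using X by (auto intro!: sm_intros)
qed

lemma smv_Dl: "smv (Dl l J)"
  unfolding Dl_def by (induction J) (auto intro: smv_Sv smv_TT)

lemma smv_S1: "smv w \<Longrightarrow> smv (S1 j w)"
  unfolding smv_def S1_fun by (auto intro!: sm_intros)
lemma sm2_S2: "sm2 W \<Longrightarrow> sm2 (S2 j W)"
  unfolding sm2_def S2_fun by (auto intro!: sm_intros)
lemma smv_dd0: "sm D f \<Longrightarrow> smv (dd0 f)"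
  unfolding smv_def dd0_fun by (auto intro!: sm_intros)
lemma sm2_dd1: "smv w \<Longrightarrow> sm2 (dd1 w)"
  unfolding smv_def sm2_def dd1_fun by (auto intro!: sm_intros)
lemma sm3_dd2: "sm2 W \<Longrightarrow> sm3 (dd2 W)"
  unfolding sm3_def sm2_def dd2_fun by (auto intro!: sm_intros)
lemma sm_ic1: "smv X \<Longrightarrow> smv w \<Longrightarrow> sm D (ic1 X w)"
  unfolding smv_def ic1_fun by (auto intro!: sm_intros finite_crds)
lemma smv_ic2: "smv X \<Longrightarrow> sm2 W \<Longrightarrow> smv (ic2 X W)"
  unfolding smv_def sm2_def ic2_fun by (auto intro!: sm_intros finite_crds)
lemma sm2_ic3: "smv X \<Longrightarrow> sm3 W \<Longrightarrow> sm2 (ic3 X W)"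
  unfolding smv_def sm3_def sm2_def ic3_fun by (auto intro!: sm_intros finite_crds)
lemma smv_lie1: "smv X \<Longrightarrow> smv w \<Longrightarrow> smv (lie1 X w)"
proof -
  assume a: "smv X" "smv w"
  have "sm D (ic1 X w)" "sm2 (dd1 w)" using a sm_ic1 sm2_dd1 by auto
  then have "smv (dd0 (ic1 X w))" "smv (ic2 X (dd1 w))" using a smv_dd0 smv_ic2 by auto
  then show ?thesis unfolding smv_def lie1_fun by (auto intro!: sm_intros)
qed
lemma sm2_lie2: "smv X \<Longrightarrow> sm2 W \<Longrightarrow> sm2 (lie2 X W)"
proof -
  assume a: "smv X" "sm2 W"
  have "sm2 (dd1 (ic2 X W))" "sm2 (ic3 X (dd2 W))" using a smv_ic2 sm2_dd1 sm3_dd2 sm2_ic3 by auto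
  then show ?thesis unfolding sm2_def lie2_fun by (auto intro!: sm_intros)
qed
lemma smv_hilbert: "sm D L \<Longrightarrow> smv (hilbert i L)"
proof -
  assume L: "sm D L"
  have "smv (S1 i (dd0 L))" using L by (intro smv_S1 smv_dd0)
  moreover have "\<And>j. smv (lie1 (TT j) (S1 j (S1 i (dd0 L))))"
    using L by (intro smv_lie1 smv_TT smv_S1 smv_dd0)
  ultimately show ?thesis unfolding smv_def hilbert_fun smv_def
    by (intro allI sm_intros; auto)
qed
lemma sm2_Pop: "sm2 W \<Longrightarrow> sm2 (Pop i W)"
proof -
  assume W: "sm2 W"
  have "sm2 (S2 i W)" using W by (intro sm2_S2)
  moreover have "\<And>j. sm2 (lie2 (TT j) (S2 j (S2 i W)))"
    using W by (intro sm2_lie2 smv_TT sm2_S2)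
  moreover have "\<And>j k. sm2 (lie2 (TT j) (lie2 (TT k) (S2 j (S2 k (S2 i W)))))"
    using W by (intro sm2_lie2 smv_TT sm2_S2)
  ultimately show ?thesis unfolding sm2_def Pop_fun by (intro allI sm_intros; auto)
qed
lemma sm2_ff: "sm D L \<Longrightarrow> sm2 (fundamental_form L)"
proof -
  assume L: "sm D L"
  have "\<And>i j. sm2 (Pop i (dd1 (hilbert j L)))" using L by (intro sm2_Pop sm2_dd1 smv_hilbert)
  then show ?thesis unfolding sm2_def ff_fun by (intro allI sm_intros; auto)
qed

lemma lie2_formula:
  assumes X: "smv X" and W: "sm2 W" and p: "p \<in> D"
  shows "lie2 X W c c' p = (\<Sum>a\<in>crds. pd c (X a) p * W a c' p)
     - (\<Sum>a\<in>crds. pd c' (X a) p * W a c p) + (\<Sum>a\<in>crds. X a p * pd a (W c c') p)"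
proof -
  have sX: "\<And>a. sm D (X a)" and sW: "\<And>a b. sm D (W a b)" using X W by (auto simp: smv_def sm2_def)
  have e1: "pd c (\<lambda>q. \<Sum>a\<in>crds. X a q * W a c' q) p
      = (\<Sum>a\<in>crds. pd c (X a) p * W a c' p + X a p * pd c (W a c') p)"
    using pd_sum_sm[OF finite_crds, of "\<lambda>a q. X a q * W a c' q"] pd_mult_sm[OF sX sW p] sX sW p
    by (simp add: sm_mult)
  have e2: "pd c' (\<lambda>q. \<Sum>a\<in>crds. X a q * W a c q) p
      = (\<Sum>a\<in>crds. pd c' (X a) p * W a c p + X a p * pd c' (W a c) p)"
    using pd_sum_sm[OF finite_crds, of "\<lambda>a q. X a q * W a c q"] pd_mult_sm[OF sX sW p] sX sW p
    by (simp add: sm_mult)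
  show ?thesis
    unfolding lie2_fun dd1_fun ic2_fun ic3_fun dd2_fun
    by (simp add: e1 e2 sum.distrib sum_subtractf algebra_simps sum_distrib_left)
qed

lemma lie1_formula:
  assumes X: "smv X" and w: "smv w" and p: "p \<in> D"
  shows "lie1 X w c p = (\<Sum>a\<in>crds. pd c (X a) p * w a p) + (\<Sum>a\<in>crds. X a p * pd a (w c) p)"
proof -
  have sX: "\<And>a. sm D (X a)" and sw: "\<And>a. sm D (w a)" using X w by (auto simp: smv_def)
  have e1: "pd c (\<lambda>q. \<Sum>a\<in>crds. X a q * w a q) p
      = (\<Sum>a\<in>crds. pd c (X a) p * w a p + X a p * pd c (w a) p)"
    using pd_sum_sm[OF finite_crds, of "\<lambda>a q. X a q * w a q"] pd_mult_sm[OF sX sw p] sX sw p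
    by (simp add: sm_mult)
  show ?thesis
    unfolding lie1_fun dd0_fun ic1_fun ic2_fun dd1_fun
    by (simp add: e1 sum.distrib sum_subtractf algebra_simps sum_distrib_left)
qed

end

lemma in_crds[simp]: "(c \<in> crds) = (crd_ord c \<le> 6)" by (simp add: crds_def Ntr_def)

lemma ord_upi[simp]: "crd_ord (upi j c) = Suc (crd_ord c)"
  by (cases c) (auto simp: upi_def crd_ord_def)

lemma upi_inj: "upi j a = upi j b \<Longrightarrow> a = b"
  by (cases a; cases b) (auto simp: upi_def split: if_splits)

lemma sum_upi_hit: fixes F :: "('a::finite) crd \<Rightarrow> real" assumes "c = upi j a0" "a0 \<in> crds"
  shows "(\<Sum>a\<in>crds. if c = upi j a then F a else 0) = F a0"
proof -
  have iff: "\<And>a. (c = upi j a) = (a0 = a)" using assms(1) upi_inj by blast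
  have "(\<Sum>a\<in>crds. if c = upi j a then F a else 0) = (\<Sum>a\<in>crds. if a0 = a then F a else 0)"
    by (simp only: iff)
  also have "\<dots> = F a0" using assms(2) by (subst sum.delta'[OF finite_crds]) simp
  finally show ?thesis .
qed

lemma sum_upi_miss: assumes "\<And>a. c \<noteq> upi j a"
  shows "(\<Sum>a\<in>crds. if c = upi j a then F a else 0) = 0"
  using assms by simp


context dom begin

definition dep2 :: "'a fn \<Rightarrow> bool" where
  "dep2 f \<longleftrightarrow> (\<forall>p\<in>D. \<forall>q. (\<forall>c. crd_ord c \<le> 2 \<longrightarrow> p c = q c) \<longrightarrow> f p = f q)"

lemma pd_hi: assumes "dep2 f" "p \<in> D" "2 < crd_ord c" shows "pd c f p = 0"
proof -
  have "lnf f p c = (\<lambda>t. f p)"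
  proof
    fix t
    have "\<forall>c'. crd_ord c' \<le> 2 \<longrightarrow> p c' = (p(c := p c + t)) c'" using assms(3) by auto
    then show "lnf f p c t = f p" using assms(1,2) unfolding dep2_def lnf_def by metis
  qed
  then show ?thesis unfolding pd_lnf by (simp add: DERIV_imp_deriv)
qed

lemma dep2_pd: assumes "dep2 f" shows "dep2 (pd c f)"
  unfolding dep2_def
proof (intro ballI allI impI)
  fix p q assume p: "p \<in> D" and ag: "\<forall>c. crd_ord c \<le> 2 \<longrightarrow> p c = q c"
  have q: "q \<in> D" using detD[OF ag] p by simp
  show "pd c f p = pd c f q"
  proof (cases "2 < crd_ord c")
    case True then show ?thesis using pd_hi[OF assms] p q by simp
  next
    case False
    have "eventually (\<lambda>t. lnf f p c t = lnf f q c t) (nhds 0)"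
      using line_ev[OF openD p, of c]
    proof (rule eventually_mono)
      fix t assume "p(c := p c + t) \<in> D"
      moreover have "\<forall>c'. crd_ord c' \<le> 2 \<longrightarrow> (p(c := p c + t)) c' = (q(c := q c + t)) c'"
        using ag False by auto
      ultimately show "lnf f p c t = lnf f q c t" using assms unfolding dep2_def lnf_def by blast
    qed
    then show ?thesis unfolding pd_lnf by (rule deriv_cong_ev) simp
  qed
qed

lemma dep2_cmult: "dep2 f \<Longrightarrow> dep2 (\<lambda>q. k * f q)"
  unfolding dep2_def by metis

lemma zero_pd: "(\<And>q. q \<in> D \<Longrightarrow> f q = 0) \<Longrightarrow> p \<in> D \<Longrightarrow> pd c f p = 0"
  using pd_cong[of f "\<lambda>q. 0" p c] pd_const by (simp add: eqD_def)

lemma pd_TT: "crd_ord a \<le> Ntr \<Longrightarrow> pd c (TT j a) p = (if c = upi j a then 1 else 0)"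
  by (simp add: TT_fun pd_coord)

definition Tj :: "nat \<Rightarrow> 'a fn \<Rightarrow> 'a fn" where
  "Tj j f p = (\<Sum>a\<in>crds. TT j a p * pd a f p)"

lemma Tj_zero: "(\<And>q. q \<in> D \<Longrightarrow> f q = 0) \<Longrightarrow> p \<in> D \<Longrightarrow> Tj j f p = 0"
  unfolding Tj_def using zero_pd by simp

lemma lie2_TT: assumes "sm2 W" "p \<in> D"
  shows "lie2 (TT j) W c c' p = (\<Sum>a\<in>crds. if c = upi j a then W a c' p else 0)
     - (\<Sum>a\<in>crds. if c' = upi j a then W a c p else 0) + Tj j (W c c') p"
proof -
  have e: "\<And>c c' a. a \<in> crds \<Longrightarrow> pd c (TT j a) p * W a c' p = (if c = upi j a then W a c' p else 0)"
    by (subst pd_TT) (auto simp: Ntr_def)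
  have s1: "(\<Sum>a\<in>crds. pd c (TT j a) p * W a c' p) = (\<Sum>a\<in>crds. if c = upi j a then W a c' p else 0)"
    by (intro sum.cong refl e) simp
  have s2: "(\<Sum>a\<in>crds. pd c' (TT j a) p * W a c p) = (\<Sum>a\<in>crds. if c' = upi j a then W a c p else 0)"
    by (intro sum.cong refl e) simp
  show ?thesis unfolding lie2_formula[OF smv_TT assms] Tj_def s1 s2 ..
qed

lemma lie1_TT: assumes "smv w" "p \<in> D"
  shows "lie1 (TT j) w c p = (\<Sum>a\<in>crds. if c = upi j a then w a p else 0) + Tj j (w c) p"
proof -
  have e: "\<And>a. a \<in> crds \<Longrightarrow> pd c (TT j a) p * w a p = (if c = upi j a then w a p else 0)"
    by (subst pd_TT) (auto simp: Ntr_def)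
  have s1: "(\<Sum>a\<in>crds. pd c (TT j a) p * w a p) = (\<Sum>a\<in>crds. if c = upi j a then w a p else 0)"
    by (intro sum.cong refl e) simp
  show ?thesis unfolding lie1_formula[OF smv_TT assms] Tj_def s1 ..
qed

end

locale lag = dom D for D :: "'a::finite pt set" +
  fixes L :: "'a fn"
  assumes lagL: "lagrangian2 D L"
begin

lemma lagD: "p \<in> D \<Longrightarrow> lnf (pds cs L) p c differentiable (at 0)"
  using lagL unfolding lagrangian2_def lnf_def by blast

lemma sm_pds: "sm D (pds cs L)"
proof -
  have "Pn D n (pds cs L)" for n
  proof (induction n arbitrary: cs)
    case 0 then show ?case using lagD by simp
  next
    case (Suc n)
    have "Pn D n (pd c (pds cs L))" for c using Suc[of "c # cs"] by simp
    then show ?case using lagD by simp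
  qed
  then show ?thesis by (simp add: sm_def)
qed

lemma sm_L: "sm D L" using sm_pds[of "[]"] by simp
lemma sm_pd1: "sm D (pd a L)" using sm_pds[of "[a]"] by simp
lemma sm_pd2: "sm D (pd a (pd b L))" using sm_pds[of "[a,b]"] by simp
lemma sm_pd3: "sm D (pd a (pd b (pd c L)))" using sm_pds[of "[a,b,c]"] by simp

lemma cont_pds: "continuous_on D (pds cs L)"
  using lagL unfolding lagrangian2_def by blast

lemma dep2_L: "dep2 L"
  unfolding dep2_def
proof (intro ballI allI impI)
  fix p q assume p: "p \<in> D" and ag: "\<forall>c. crd_ord c \<le> 2 \<longrightarrow> p c = q c"
  have q: "q \<in> D" using detD[OF ag] p by simp
  then show "L p = L q" using lagL p ag unfolding lagrangian2_def by blast
qed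

lemma dep2_pds: "dep2 (pds cs L)"
  by (induction cs) (auto simp: dep2_L dep2_pd)

lemma dep2_pd1: "dep2 (pd a L)" using dep2_pds[of "[a]"] by simp
lemma dep2_pd2: "dep2 (pd a (pd b L))" using dep2_pds[of "[a,b]"] by simp

lemma schwarz_pds: assumes "p \<in> D"
  shows "pd f (pd e (pds cs L)) p = pd e (pd f (pds cs L)) p"
  using schwarz[OF assms sm_pds, of f e cs] cont_pds[of "f # e # cs"] cont_pds[of "e # f # cs"] by simp

lemma schwarz2: "p \<in> D \<Longrightarrow> pd f (pd e L) p = pd e (pd f L) p"
  using schwarz_pds[of p f e "[]"] by simp
lemma schwarz3: "p \<in> D \<Longrightarrow> pd f (pd e (pd a L)) p = pd e (pd f (pd a L)) p"
  using schwarz_pds[of p f e "[a]"] by simp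

end

context dom begin
lemma Tj_fun: "Tj j g = (\<lambda>q. \<Sum>a\<in>crds. TT j a q * pd a g q)"
  by (rule ext) (simp add: Tj_def)

lemma sm_Tj: "sm D g \<Longrightarrow> sm D (Tj j g)"
  unfolding Tj_fun using smv_TT by (auto simp: smv_def intro!: sm_intros finite_crds)

lemma pd_Tj: assumes "sm D g" "dep2 g" "p \<in> D" "2 < crd_ord c"
  shows "pd c (Tj j g) p = (\<Sum>a\<in>crds. if c = upi j a then pd a g p else 0)"
proof -
  have sT: "\<And>a. sm D (TT j a)" using smv_TT by (simp add: smv_def)
  have "pd c (Tj j g) p = (\<Sum>a\<in>crds. pd c (\<lambda>q. TT j a q * pd a g q) p)"
    unfolding Tj_fun using assms(1,3) sT by (intro pd_sum_sm finite_crds sm_mult sm_pd) auto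
  also have "\<dots> = (\<Sum>a\<in>crds. if c = upi j a then pd a g p else 0)"
  proof (intro sum.cong refl)
    fix a :: "'a crd" assume a: "a \<in> crds"
    have "pd c (\<lambda>q. TT j a q * pd a g q) p = pd c (TT j a) p * pd a g p + TT j a p * pd c (pd a g) p"
      using assms sT by (intro pd_mult_sm sm_pd) auto
    also have "pd c (pd a g) p = 0" using pd_hi[OF dep2_pd[OF assms(2)] assms(3,4)] .
    finally show "pd c (\<lambda>q. TT j a q * pd a g q) p = (if c = upi j a then pd a g p else 0)"
      using a by (simp add: pd_TT Ntr_def)
  qed
  finally show ?thesis .
qed
end

context lag begin

abbreviation "w i j \<equiv> S1 j (S1 i (dd0 L))"

lemma w_val: "w i j c q = real (crd_ord c + 1) * (real (crd_ord c + 2) * pd (upi i (upi j c)) L q)"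
  by (simp add: S1_def dd0_def)

lemma smv_w: "smv (w i j)" by (intro smv_S1 smv_dd0 sm_L)
lemma sm_w: "sm D (w i j c)" using smv_w by (simp add: smv_def)

lemma dep2_w: "dep2 (w i j c)"
proof -
  have "w i j c = (\<lambda>q. real (crd_ord c + 1) * (real (crd_ord c + 2) * pd (upi i (upi j c)) L q))"
    by (rule ext) (rule w_val)
  then show ?thesis using dep2_cmult[OF dep2_cmult[OF dep2_pd1]] by simp
qed

lemma w_hi: "1 \<le> crd_ord c \<Longrightarrow> q \<in> D \<Longrightarrow> w i j c q = 0"
  unfolding w_val using pd_hi[OF dep2_L] by simp

lemma th_hi: assumes "2 \<le> crd_ord c" "q \<in> D" shows "hilbert k L c q = 0"
proof -
  have s1: "S1 k (dd0 L) c q = 0" using pd_hi[OF dep2_L assms(2)] assms(1) by (simp add: S1_def dd0_def)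
  have l: "lie1 (TT j) (w k j) c q = 0" for j
  proof -
    have "(\<Sum>a\<in>crds. if c = upi j a then w k j a q else 0) = 0"
      using w_hi[OF _ assms(2)] assms(1) by (intro sum.neutral) auto
    moreover have "Tj j (w k j c) q = 0" using w_hi assms by (intro Tj_zero) auto
    ultimately show ?thesis using lie1_TT[OF smv_w assms(2)] by simp
  qed
  show ?thesis unfolding hilbert_def using s1 l by simp
qed

lemma ord1_cases: "crd_ord d = 1 \<Longrightarrow> (\<exists>\<alpha>. d = (\<alpha>, 1, 0)) \<or> (\<exists>\<alpha>. d = (\<alpha>, 0, 1))"
  by (cases d) (auto simp: crd_ord_def)

lemma th_1: assumes "crd_ord d = 1" "q \<in> D" shows "hilbert k L d q = pd (upi k d) L q"
proof -
  have s1: "S1 k (dd0 L) d q = 2 * pd (upi k d) L q" using assms(1) by (simp add: S1_def dd0_def)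
  have T0: "Tj j (w k j d) q = 0" for j using w_hi assms by (intro Tj_zero) auto
  have l1: "lie1 (TT 1) (w k 1) d q + lie1 (TT 2) (w k 2) d q = 2 * pd (upi k d) L q"
    using ord1_cases[OF assms(1)]
  proof
    assume "\<exists>\<alpha>. d = (\<alpha>, 1, 0)"
    then obtain \<alpha> where d: "d = (\<alpha>, 1, 0)" by blast
    have a: "(\<Sum>a\<in>crds. if d = upi 1 a then w k 1 a q else 0) = w k 1 (\<alpha>, 0, 0) q"
      by (rule sum_upi_hit) (auto simp: d upi_def crd_ord_def)
    have b: "(\<Sum>a\<in>crds. if d = upi 2 a then w k 2 a q else 0) = 0"
      by (rule sum_upi_miss) (auto simp: d upi_def)
    have a': "w k 1 (\<alpha>, 0, 0) q = 2 * pd (upi k d) L q" by (simp add: w_val d upi_def crd_ord_def)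
    show ?thesis using lie1_TT[OF smv_w[where i=k and j=1] assms(2), where j=1 and c=d] lie1_TT[OF smv_w[where i=k and j=2] assms(2), where j=2 and c=d] a a' b T0
      by simp
  next
    assume "\<exists>\<alpha>. d = (\<alpha>, 0, 1)"
    then obtain \<alpha> where d: "d = (\<alpha>, 0, 1)" by blast
    have a: "(\<Sum>a\<in>crds. if d = upi 2 a then w k 2 a q else 0) = w k 2 (\<alpha>, 0, 0) q"
      by (rule sum_upi_hit) (auto simp: d upi_def crd_ord_def)
    have b: "(\<Sum>a\<in>crds. if d = upi 1 a then w k 1 a q else 0) = 0"
      by (rule sum_upi_miss) (auto simp: d upi_def)
    have a': "w k 2 (\<alpha>, 0, 0) q = 2 * pd (upi k d) L q" by (simp add: w_val d upi_def crd_ord_def)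
    show ?thesis using lie1_TT[OF smv_w[where i=k and j=1] assms(2), where j=1 and c=d] lie1_TT[OF smv_w[where i=k and j=2] assms(2), where j=2 and c=d] a a' b T0
      by simp
  qed
  show ?thesis unfolding hilbert_def using s1 l1 by simp
qed

lemma pd_th0: assumes "crd_ord b = 0" "3 \<le> crd_ord c" "p \<in> D"
  shows "pd c (hilbert k L b) p = - (\<Sum>j\<in>{1,2::nat}. \<Sum>a\<in>crds.
            if c = upi j a then pd a (pd (upi k (upi j b)) L) p else 0)"
proof -
  let ?G = "\<lambda>q. S1 k (dd0 L) b q - 1/2 * (\<Sum>j\<in>{1,2::nat}. Tj j (w k j b) q)"
  have miss: "(\<Sum>a\<in>crds. if b = upi j a then w k j a q else 0) = 0" for j q
    using assms(1) by (intro sum_upi_miss) auto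
  have eq: "eqD D (hilbert k L b) ?G"
    unfolding eqD_def hilbert_def using lie1_TT[OF smv_w] miss by simp
  have sS: "sm D (S1 k (dd0 L) b)" using smv_S1[OF smv_dd0[OF sm_L]] by (simp add: smv_def)
  have sT: "\<And>j. sm D (Tj j (w k j b))" using sm_Tj sm_w by blast
  have "pd c (hilbert k L b) p = pd c ?G p" using pd_cong[OF eq assms(3)] .
  also have "\<dots> = pd c (S1 k (dd0 L) b) p - 1/2 * (\<Sum>j\<in>{1,2::nat}. pd c (Tj j (w k j b)) p)"
  proof -
    have sSum: "sm D (\<lambda>q. \<Sum>j\<in>{1,2::nat}. Tj j (w k j b) q)" by (intro sm_sum) (auto intro: sT)
    have "pd c ?G p = pd c (S1 k (dd0 L) b) p - pd c (\<lambda>q. 1/2 * (\<Sum>j\<in>{1,2::nat}. Tj j (w k j b) q)) p"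
      by (rule pd_diff_sm[OF sS sm_cmult[OF sSum] assms(3)])
    also have "pd c (\<lambda>q. 1/2 * (\<Sum>j\<in>{1,2::nat}. Tj j (w k j b) q)) p
        = 1/2 * pd c (\<lambda>q. \<Sum>j\<in>{1,2::nat}. Tj j (w k j b) q) p"
      by (rule pd_cmult_sm[OF sSum assms(3)])
    also have "pd c (\<lambda>q. \<Sum>j\<in>{1,2::nat}. Tj j (w k j b) q) p = (\<Sum>j\<in>{1,2::nat}. pd c (Tj j (w k j b)) p)"
      by (rule pd_sum_sm) (auto intro: sT assms(3))
    finally show ?thesis .
  qed
  finally have main: "pd c (hilbert k L b) p = pd c (S1 k (dd0 L) b) p - 1/2 * (\<Sum>j\<in>{1,2::nat}. pd c (Tj j (w k j b)) p)" .
  have s0: "pd c (S1 k (dd0 L) b) p = 0"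
  proof -
    have "S1 k (dd0 L) b = (\<lambda>q. real (crd_ord b + 1) * pd (upi k b) L q)" by (rule ext) (simp add: S1_def dd0_def)
    then show ?thesis using pd_hi[OF dep2_cmult[OF dep2_pd1] assms(3)] assms(2) by simp
  qed
  have tj: "pd c (Tj j (w k j b)) p = (\<Sum>a\<in>crds. if c = upi j a then 2 * pd a (pd (upi k (upi j b)) L) p else 0)" for j
  proof -
    have e1: "pd c (Tj j (w k j b)) p = (\<Sum>a\<in>crds. if c = upi j a then pd a (w k j b) p else 0)"
      using assms by (intro pd_Tj sm_w dep2_w) auto
    have "w k j b = (\<lambda>q. 2 * pd (upi k (upi j b)) L q)" using assms(1) by (intro ext) (simp add: w_val)
    then have e2: "pd a (w k j b) p = 2 * pd a (pd (upi k (upi j b)) L) p" for a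
      using pd_cmult_sm[OF sm_pd1 assms(3)] by simp
    show ?thesis unfolding e1 e2 ..
  qed
  have h2: "(\<Sum>a\<in>crds. if c = upi j a then 2 * pd a (pd (upi k (upi j b)) L) p else 0)
      = 2 * (\<Sum>a\<in>crds. if c = upi j a then pd a (pd (upi k (upi j b)) L) p else 0)" for j
    unfolding sum_distrib_left by (intro sum.cong refl) simp
  show ?thesis unfolding main s0 tj h2 by (simp add: field_simps)
qed

abbreviation "V k \<equiv> dd1 (hilbert k L)"

lemma V_anti: "V k c c' p = - V k c' c p" by (simp add: dd1_def)

lemma pd_th_hi: "2 \<le> crd_ord c \<Longrightarrow> p \<in> D \<Longrightarrow> pd e (hilbert k L c) p = 0"
  using zero_pd th_hi by blast

lemma pd_th_1: "crd_ord d = 1 \<Longrightarrow> p \<in> D \<Longrightarrow> pd e (hilbert k L d) p = pd e (pd (upi k d) L) p"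
  using pd_cong[of "hilbert k L d" "pd (upi k d) L" p e] th_1 by (simp add: eqD_def)

lemma V30: "crd_ord c = 3 \<Longrightarrow> crd_ord b = 0 \<Longrightarrow> p \<in> D \<Longrightarrow>
   V k c b p = - (\<Sum>j\<in>{1,2::nat}. \<Sum>a\<in>crds. if c = upi j a then pd a (pd (upi k (upi j b)) L) p else 0)"
  using pd_th0[of b c p k] pd_th_hi[of c p b k] by (simp add: dd1_def)

lemma V03: "crd_ord c = 3 \<Longrightarrow> crd_ord b = 0 \<Longrightarrow> p \<in> D \<Longrightarrow>
   V k b c p = (\<Sum>j\<in>{1,2::nat}. \<Sum>a\<in>crds. if c = upi j a then pd a (pd (upi k (upi j b)) L) p else 0)"
  using V30[of c b p k] V_anti[of k b c p] by simp

lemma V21: "crd_ord c = 2 \<Longrightarrow> crd_ord d = 1 \<Longrightarrow> p \<in> D \<Longrightarrow> V k c d p = pd c (pd (upi k d) L) p"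
  using pd_th_1[of d p c k] pd_th_hi[of c p d k] by (simp add: dd1_def)

lemma V12: "crd_ord c = 2 \<Longrightarrow> crd_ord d = 1 \<Longrightarrow> p \<in> D \<Longrightarrow> V k d c p = - pd c (pd (upi k d) L) p"
  using V21[of c d p k] V_anti[of k d c p] by simp

lemma V_hi_aux: assumes "4 \<le> crd_ord c + crd_ord c'" "crd_ord c' \<le> crd_ord c" "p \<in> D"
  shows "V k c c' p = 0"
proof -
  have A: "pd c' (hilbert k L c) p = 0" using assms by (intro pd_th_hi) auto
  have B: "pd c (hilbert k L c') p = 0"
  proof (cases "2 \<le> crd_ord c'")
    case True then show ?thesis using assms by (intro pd_th_hi) auto
  next
    case False
    then consider "crd_ord c' = 1" | "crd_ord c' = 0" by linarith
    then show ?thesis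
    proof cases
      case 1
      then show ?thesis using pd_th_1[OF 1 assms(3)] pd_hi[OF dep2_pd1 assms(3)] assms(1) by simp
    next
      case 2
      have "(\<Sum>a\<in>crds. if c = upi j a then pd a (pd (upi k (upi j c')) L) p else 0) = 0" for j
      proof (intro sum.neutral ballI)
        fix a assume "a \<in> (crds :: 'a crd set)"
        show "(if c = upi j a then pd a (pd (upi k (upi j c')) L) p else 0) = 0"
        proof (cases "c = upi j a")
          case True then have "2 < crd_ord a" using assms(1) 2 by auto
          then show ?thesis using pd_hi[OF dep2_pd1 assms(3)] by simp
        qed simp
      qed
      then show ?thesis using pd_th0[OF 2 _ assms(3)] assms(1) 2 by simp
    qed
  qed
  show ?thesis using A B by (simp add: dd1_def)
qed

lemma V_hi: assumes "4 \<le> crd_ord c + crd_ord c'" "p \<in> D" shows "V k c c' p = 0"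
proof (cases "crd_ord c' \<le> crd_ord c")
  case True then show ?thesis using V_hi_aux assms by blast
next
  case False
  then have "V k c' c p = 0" using V_hi_aux[of c' c p k] assms by simp
  then show ?thesis using V_anti[of k c c' p] by simp
qed

end

context lag begin

lemma S2_vanish: assumes "\<And>c c' q. q \<in> D \<Longrightarrow> m \<le> crd_ord c + crd_ord c' \<Longrightarrow> W c c' q = 0"
  "q \<in> D" "m \<le> Suc (crd_ord c + crd_ord c')" shows "S2 j W c c' q = 0"
  using assms by (simp add: S2_def)

lemma sm2_V: "sm2 (V k)" by (intro sm2_dd1 smv_hilbert sm_L)

lemma SV_van: "q \<in> D \<Longrightarrow> 3 \<le> crd_ord c + crd_ord c' \<Longrightarrow> S2 i (V k) c c' q = 0"
  by (rule S2_vanish[where m=4]) (auto intro: V_hi)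
lemma SSV_van: "q \<in> D \<Longrightarrow> 2 \<le> crd_ord c + crd_ord c' \<Longrightarrow> S2 j (S2 i (V k)) c c' q = 0"
  by (rule S2_vanish[where m=3]) (auto intro: SV_van)
lemma SSSV_van: "q \<in> D \<Longrightarrow> 1 \<le> crd_ord c + crd_ord c' \<Longrightarrow> S2 j' (S2 j (S2 i (V k))) c c' q = 0"
  by (rule S2_vanish[where m=2]) (auto intro: SSV_van)

lemma lieTT_20: assumes "sm2 W" "p \<in> D"
  shows "lie2 (TT j) W (\<gamma>,2,0) (\<beta>,0,0) p = (if j = 1 then W (\<gamma>,1,0) (\<beta>,0,0) p else 0) + Tj j (W (\<gamma>,2,0) (\<beta>,0,0)) p"
proof -
  have m: "(\<Sum>a\<in>crds. if (\<beta>,0,0) = upi j a then W a (\<gamma>,2,0) p else 0) = 0"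
    by (rule sum_upi_miss) (auto simp: upi_def)
  have h: "(\<Sum>a\<in>crds. if (\<gamma>,2,0) = upi j a then W a (\<beta>,0,0) p else 0) = (if j = 1 then W (\<gamma>,1,0) (\<beta>,0,0) p else 0)"
  proof (cases "j = 1")
    case True then show ?thesis by (simp, intro sum_upi_hit) (auto simp: upi_def crd_ord_def)
  next
    case False then show ?thesis by (simp, intro sum_upi_miss) (auto simp: upi_def)
  qed
  show ?thesis using lie2_TT[OF assms, where j=j and c="(\<gamma>,2,0)" and c'="(\<beta>,0,0)"] m h by simp
qed

lemma lieTT_10: assumes "sm2 W" "p \<in> D"
  shows "lie2 (TT j) W (\<gamma>,1,0) (\<beta>,0,0) p = (if j = 1 then W (\<gamma>,0,0) (\<beta>,0,0) p else 0) + Tj j (W (\<gamma>,1,0) (\<beta>,0,0)) p"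
proof -
  have m: "(\<Sum>a\<in>crds. if (\<beta>,0,0) = upi j a then W a (\<gamma>,1,0) p else 0) = 0"
    by (rule sum_upi_miss) (auto simp: upi_def)
  have h: "(\<Sum>a\<in>crds. if (\<gamma>,1,0) = upi j a then W a (\<beta>,0,0) p else 0) = (if j = 1 then W (\<gamma>,0,0) (\<beta>,0,0) p else 0)"
  proof (cases "j = 1")
    case True then show ?thesis by (simp, intro sum_upi_hit) (auto simp: upi_def crd_ord_def)
  next
    case False then show ?thesis by (simp, intro sum_upi_miss) (auto simp: upi_def)
  qed
  show ?thesis using lie2_TT[OF assms, where j=j and c="(\<gamma>,1,0)" and c'="(\<beta>,0,0)"] m h by simp
qed

lemma Pop_val: assumes p: "p \<in> D"
  shows "Pop i (V k) (\<gamma>,2,0) (\<beta>,0,0) p = 1/4 * S2 i (V k) (\<gamma>,2,0) (\<beta>,0,0) p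
     - 1/24 * S2 1 (S2 i (V k)) (\<gamma>,1,0) (\<beta>,0,0) p
     + 1/192 * S2 1 (S2 1 (S2 i (V k))) (\<gamma>,0,0) (\<beta>,0,0) p"
proof -
  have s1: "sm2 (S2 j (S2 i (V k)))" for j by (intro sm2_S2 sm2_V)
  have s3: "sm2 (S2 j (S2 j' (S2 i (V k))))" for j j' by (intro sm2_S2 sm2_V)
  have t2: "lie2 (TT j) (S2 j (S2 i (V k))) (\<gamma>,2,0) (\<beta>,0,0) p
      = (if j = 1 then S2 1 (S2 i (V k)) (\<gamma>,1,0) (\<beta>,0,0) p else 0)" for j
  proof -
    have "Tj j (S2 j (S2 i (V k)) (\<gamma>,2,0) (\<beta>,0,0)) p = 0"
      using p by (intro Tj_zero SSV_van) (auto simp: crd_ord_def)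
    then show ?thesis using lieTT_20[OF s1 p, where j=j and \<gamma>=\<gamma> and \<beta>=\<beta>] by simp
  qed
  have t3: "lie2 (TT j) (lie2 (TT j') (S2 j (S2 j' (S2 i (V k))))) (\<gamma>,2,0) (\<beta>,0,0) p
      = (if j = 1 \<and> j' = 1 then S2 1 (S2 1 (S2 i (V k))) (\<gamma>,0,0) (\<beta>,0,0) p else 0)" for j j'
  proof -
    let ?W = "S2 j (S2 j' (S2 i (V k)))"
    let ?Y = "lie2 (TT j') ?W"
    have sW: "sm2 ?W" by (intro sm2_S2 sm2_V)
    have sY: "sm2 ?Y" by (intro sm2_lie2 smv_TT sW)
    have Y0: "?Y (\<gamma>,2,0) (\<beta>,0,0) q = 0" if q: "q \<in> D" for q
    proof -
      have "?W (\<gamma>,1,0) (\<beta>,0,0) q = 0" using q by (intro SSSV_van) (auto simp: crd_ord_def)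
      moreover have "Tj j' (?W (\<gamma>,2,0) (\<beta>,0,0)) q = 0"
        using q by (intro Tj_zero SSSV_van) (auto simp: crd_ord_def)
      ultimately show ?thesis using lieTT_20[OF sW q, where j=j' and \<gamma>=\<gamma> and \<beta>=\<beta>] by (cases "j' = 1") auto
    qed
    have Y1: "?Y (\<gamma>,1,0) (\<beta>,0,0) p = (if j' = 1 then ?W (\<gamma>,0,0) (\<beta>,0,0) p else 0)"
    proof -
      have "Tj j' (?W (\<gamma>,1,0) (\<beta>,0,0)) p = 0"
        using p by (intro Tj_zero SSSV_van) (auto simp: crd_ord_def)
      then show ?thesis using lieTT_10[OF sW p, where j=j' and \<gamma>=\<gamma> and \<beta>=\<beta>] by simp
    qed
    have "Tj j (?Y (\<gamma>,2,0) (\<beta>,0,0)) p = 0" using p Y0 by (intro Tj_zero) auto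
    then show ?thesis using lieTT_20[OF sY p, where j=j and \<gamma>=\<gamma> and \<beta>=\<beta>] Y1 by auto
  qed
  show ?thesis unfolding Pop_def t2 t3 by simp
qed



lemma V3: assumes "crd_ord b = 0" "a + c = 3" "p \<in> D"
  shows "V k (\<delta>,a,c) b p = -((if a = 0 then 0 else pd (\<delta>,a-1,c) (pd (upi k (upi (Suc 0) b)) L) p)
        + (if c = 0 then 0 else pd (\<delta>,a,c-1) (pd (upi k (upi 2 b)) L) p))"
proof -
  have h1: "(\<Sum>x\<in>crds. if (\<delta>,a,c) = upi (Suc 0) x then F x else 0) = (if a = 0 then 0 else F (\<delta>,a-1,c))" for F :: "'a crd \<Rightarrow> real"
  proof (cases "a = 0")
    case True then show ?thesis by (simp, intro sum_upi_miss) (auto simp: upi_def)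
  next
    case False
    have "(\<Sum>x\<in>crds. if (\<delta>,a,c) = upi (Suc 0) x then F x else 0) = F (\<delta>,a-1,c)"
      by (rule sum_upi_hit) (use False assms(2) in \<open>auto simp: upi_def crd_ord_def\<close>)
    then show ?thesis using False by simp
  qed
  have h2: "(\<Sum>x\<in>crds. if (\<delta>,a,c) = upi 2 x then F x else 0) = (if c = 0 then 0 else F (\<delta>,a,c-1))" for F :: "'a crd \<Rightarrow> real"
  proof (cases "c = 0")
    case True then show ?thesis by (simp, intro sum_upi_miss) (auto simp: upi_def)
  next
    case False
    have "(\<Sum>x\<in>crds. if (\<delta>,a,c) = upi 2 x then F x else 0) = F (\<delta>,a,c-1)"
      by (rule sum_upi_hit) (use False assms(2) in \<open>auto simp: upi_def crd_ord_def\<close>)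
    then show ?thesis using False by simp
  qed
  have "V k (\<delta>,a,c) b p = - ((\<Sum>x\<in>crds. if (\<delta>,a,c) = upi (Suc 0) x then pd x (pd (upi k (upi (Suc 0) b)) L) p else 0)
     + (\<Sum>x\<in>crds. if (\<delta>,a,c) = upi 2 x then pd x (pd (upi k (upi 2 b)) L) p else 0))"
    using V30[of "(\<delta>,a,c)" b p k] assms by (simp add: crd_ord_def)
  then show ?thesis unfolding h1 h2 .
qed

lemma V03': assumes "crd_ord b = 0" "a + c = 3" "p \<in> D"
  shows "V k b (\<delta>,a,c) p = ((if a = 0 then 0 else pd (\<delta>,a-1,c) (pd (upi k (upi (Suc 0) b)) L) p)
        + (if c = 0 then 0 else pd (\<delta>,a,c-1) (pd (upi k (upi 2 b)) L) p))"
  using V3[OF assms, of k \<delta>] V_anti[of k b "(\<delta>,a,c)" p] by simp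


lemma Theta_val: assumes p: "p \<in> D"
  shows "fundamental_form L (\<gamma>,2,0) (\<beta>,0,0) p
     = -21/32 * pd (\<beta>,2,0) (pd (\<gamma>,1,1) L) p + 5/32 * pd (\<beta>,1,1) (pd (\<gamma>,2,0) L) p"
proof -
  have sw: "pd (\<gamma>,a,c) (pd (\<beta>,a',c') L) p = pd (\<beta>,a',c') (pd (\<gamma>,a,c) L) p" for a c a' c'
    using schwarz2[OF p] by simp
  show ?thesis unfolding fundamental_form_def Pop_val[OF p] using p
    by (simp add: S2_def V3 V03' V21 V12 crd_ord_def upi_def sw numeral_2_eq_2 field_simps)
qed

end

definition wt :: "'a crd \<Rightarrow> real" where
  "wt a = (if fst (snd a) = 0 then 0 else real (crd_ord a))"

lemma X_fun: assumes "crd_ord a \<le> 6"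
  shows "Dl 1 [1] a = (\<lambda>q. wt a * q a)"
proof (rule ext)
  fix q
  obtain \<delta> i j where a: "a = (\<delta>, i, j)" by (cases a) auto
  show "Dl 1 [1] a q = wt a * q a"
    using assms by (auto simp: a Dl_def Sv_def TT_def wt_def crd_ord_def upi_def Ntr_def)
qed

context lag begin

lemma pd_X: assumes "crd_ord a \<le> 6" "q \<in> D"
  shows "pd e (Dl 1 [1] a) q = (if e = a then wt a else 0)"
  unfolding X_fun[OF assms(1)] using pd_cmult_sm[OF sm_coord assms(2)] by (simp add: pd_coord)

lemma sum_pdX: assumes "crd_ord e \<le> 6" "q \<in> D"
  shows "(\<Sum>a\<in>crds. pd e (Dl 1 [1] a) q * G a) = wt e * G e"
proof -
  have "(\<Sum>a\<in>crds. pd e (Dl 1 [1] a) q * G a) = (\<Sum>a\<in>crds. if e = a then wt a * G a else 0)"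
    using pd_X assms(2) by (intro sum.cong refl) auto
  also have "\<dots> = wt e * G e" using assms(1) by (subst sum.delta'[OF finite_crds]) simp
  finally show ?thesis .
qed

lemma smX: "sm D (Dl 1 [1] a)" using smv_Dl by (simp add: smv_def)

lemma homog_step1:
  assumes hom: "\<forall>q\<in>D. lie0 (Dl 1 [1]) L q = L q" and e: "crd_ord e \<le> 6" and q: "q \<in> D"
  shows "(\<Sum>a\<in>crds. Dl 1 [1] a q * pd e (pd a L) q) = (1 - wt e) * pd e L q"
proof -
  have eq: "eqD D (\<lambda>q. \<Sum>a\<in>crds. Dl 1 [1] a q * pd a L q) L"
    using hom by (simp add: eqD_def lie0_def ic1_def dd0_def)
  have "pd e (\<lambda>q. \<Sum>a\<in>crds. Dl 1 [1] a q * pd a L q) q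
      = (\<Sum>a\<in>crds. pd e (\<lambda>q. Dl 1 [1] a q * pd a L q) q)"
    using q by (intro pd_sum_sm finite_crds sm_mult smX sm_pd1)
  also have "\<dots> = (\<Sum>a\<in>crds. pd e (Dl 1 [1] a) q * pd a L q + Dl 1 [1] a q * pd e (pd a L) q)"
    using q by (intro sum.cong refl pd_mult_sm smX sm_pd1)
  also have "\<dots> = wt e * pd e L q + (\<Sum>a\<in>crds. Dl 1 [1] a q * pd e (pd a L) q)"
    by (simp only: sum.distrib sum_pdX[OF e q])
  finally have "wt e * pd e L q + (\<Sum>a\<in>crds. Dl 1 [1] a q * pd e (pd a L) q) = pd e L q"
    using pd_cong[OF eq q] by simp
  then show ?thesis by (simp add: algebra_simps)
qed

lemma homog_step2:
  assumes hom: "\<forall>q\<in>D. lie0 (Dl 1 [1]) L q = L q" and e: "crd_ord e \<le> 6" and f: "crd_ord f \<le> 6"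
    and p: "p \<in> D"
  shows "(\<Sum>a\<in>crds. Dl 1 [1] a p * pd a (pd f (pd e L)) p) = (1 - wt e - wt f) * pd f (pd e L) p"
proof -
  have eq: "eqD D (\<lambda>q. \<Sum>a\<in>crds. Dl 1 [1] a q * pd e (pd a L) q) (\<lambda>q. (1 - wt e) * pd e L q)"
    using homog_step1[OF hom e] by (simp add: eqD_def)
  have "pd f (\<lambda>q. \<Sum>a\<in>crds. Dl 1 [1] a q * pd e (pd a L) q) p
      = (\<Sum>a\<in>crds. pd f (\<lambda>q. Dl 1 [1] a q * pd e (pd a L) q) p)"
    using p by (intro pd_sum_sm finite_crds sm_mult smX sm_pd2)
  also have "\<dots> = (\<Sum>a\<in>crds. pd f (Dl 1 [1] a) p * pd e (pd a L) p + Dl 1 [1] a p * pd f (pd e (pd a L)) p)"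
    using p by (intro sum.cong refl pd_mult_sm smX sm_pd2)
  also have "\<dots> = wt f * pd e (pd f L) p + (\<Sum>a\<in>crds. Dl 1 [1] a p * pd f (pd e (pd a L)) p)"
    by (simp only: sum.distrib sum_pdX[OF f p])
  finally have A: "wt f * pd e (pd f L) p + (\<Sum>a\<in>crds. Dl 1 [1] a p * pd f (pd e (pd a L)) p)
      = (1 - wt e) * pd f (pd e L) p"
    using pd_cong[OF eq p] pd_cmult_sm[OF sm_pd1 p] by simp
  have B: "pd a (pd f (pd e L)) p = pd f (pd e (pd a L)) p" for a
  proof -
    have "pd a (pd f (pd e L)) p = pd f (pd a (pd e L)) p" using schwarz3[OF p, of a f e] .
    also have "\<dots> = pd f (pd e (pd a L)) p"
      using schwarz2 by (intro pd_cong[OF _ p]) (simp add: eqD_def)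
    finally show ?thesis .
  qed
  have C: "pd e (pd f L) p = pd f (pd e L) p" using schwarz2[OF p] .
  show ?thesis using A unfolding B C by (simp add: algebra_simps)
qed


lemma F_zero:
  assumes hom: "\<forall>q\<in>D. lie0 (Dl 1 [1]) L q = L q"
    and proj: "\<forall>p\<in>D. \<forall>c c'. lie2 (Dl 1 [1]) (fundamental_form L) c c' p = 0"
    and p: "p \<in> D"
  shows "-21/32 * pd (\<beta>,2,0) (pd (\<gamma>,1,1) L) p + 5/32 * pd (\<beta>,1,1) (pd (\<gamma>,2,0) L) p = 0"
proof -
  let ?Th = "fundamental_form L" and ?X = "Dl 1 [1]"
  let ?A = "pd (\<beta>,2,0) (pd (\<gamma>,1,1) L)" and ?B = "pd (\<beta>,1,1) (pd (\<gamma>,2,0) L)"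
  let ?F = "\<lambda>q. -21/32 * ?A q + 5/32 * ?B q"
  have eqF: "eqD D (?Th (\<gamma>,2,0) (\<beta>,0,0)) ?F" using Theta_val by (simp add: eqD_def)
  have L2: "lie2 ?X ?Th (\<gamma>,2,0) (\<beta>,0,0) p
     = (\<Sum>a\<in>crds. pd (\<gamma>,2,0) (?X a) p * ?Th a (\<beta>,0,0) p)
     - (\<Sum>a\<in>crds. pd (\<beta>,0,0) (?X a) p * ?Th a (\<gamma>,2,0) p)
     + (\<Sum>a\<in>crds. ?X a p * pd a (?Th (\<gamma>,2,0) (\<beta>,0,0)) p)"
    by (rule lie2_formula[OF smv_Dl sm2_ff[OF sm_L] p])
  have t1: "(\<Sum>a\<in>crds. pd (\<gamma>,2,0) (?X a) p * ?Th a (\<beta>,0,0) p) = 2 * ?F p"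
    using sum_pdX[of "(\<gamma>,2,0)" p "\<lambda>a. ?Th a (\<beta>,0,0) p"] p Theta_val[OF p]
    by (simp add: wt_def crd_ord_def)
  have t2: "(\<Sum>a\<in>crds. pd (\<beta>,0,0) (?X a) p * ?Th a (\<gamma>,2,0) p) = 0"
    using sum_pdX[of "(\<beta>,0,0)" p "\<lambda>a. ?Th a (\<gamma>,2,0) p"] p
    by (simp add: wt_def crd_ord_def)
  have sA: "sm D ?A" and sB: "sm D ?B" by (rule sm_pd2)+
  have pdF: "pd a (?Th (\<gamma>,2,0) (\<beta>,0,0)) p = -21/32 * pd a ?A p + 5/32 * pd a ?B p" for a
  proof -
    have "pd a (?Th (\<gamma>,2,0) (\<beta>,0,0)) p = pd a ?F p" by (rule pd_cong[OF eqF p])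
    also have "\<dots> = pd a (\<lambda>q. -21/32 * ?A q) p + pd a (\<lambda>q. 5/32 * ?B q) p"
      by (rule pd_add_sm[OF sm_cmult[OF sA] sm_cmult[OF sB] p])
    also have "\<dots> = -21/32 * pd a ?A p + 5/32 * pd a ?B p"
      by (simp only: pd_cmult_sm[OF sA p] pd_cmult_sm[OF sB p])
    finally show ?thesis .
  qed
  have hA: "(\<Sum>a\<in>crds. ?X a p * pd a ?A p) = -3 * ?A p"
    using homog_step2[OF hom, of "(\<gamma>,1,1)" "(\<beta>,2,0)" p] p by (simp add: wt_def crd_ord_def)
  have hB: "(\<Sum>a\<in>crds. ?X a p * pd a ?B p) = -3 * ?B p"
    using homog_step2[OF hom, of "(\<gamma>,2,0)" "(\<beta>,1,1)" p] p by (simp add: wt_def crd_ord_def)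
  have t3: "(\<Sum>a\<in>crds. ?X a p * pd a (?Th (\<gamma>,2,0) (\<beta>,0,0)) p) = -3 * ?F p"
  proof -
    have "(\<Sum>a\<in>crds. ?X a p * pd a (?Th (\<gamma>,2,0) (\<beta>,0,0)) p)
        = (\<Sum>a\<in>crds. -21/32 * (?X a p * pd a ?A p) + 5/32 * (?X a p * pd a ?B p))"
      unfolding pdF by (simp add: algebra_simps)
    also have "\<dots> = -21/32 * (\<Sum>a\<in>crds. ?X a p * pd a ?A p) + 5/32 * (\<Sum>a\<in>crds. ?X a p * pd a ?B p)"
      by (simp only: sum.distrib sum_distrib_left)
    also have "\<dots> = -3 * ?F p" unfolding hA hB by simp
    finally show ?thesis .
  qed
  have "lie2 ?X ?Th (\<gamma>,2,0) (\<beta>,0,0) p = 0" using proj p by blast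
  then have "2 * ?F p - 0 + -3 * ?F p = 0" using L2 t1 t2 t3 by simp
  then show ?thesis by simp
qed

end

theorem main_aux:
  fixes D :: "('a::finite) pt set" and L :: "'a fn"
  assumes "frame_domain D" and "lagrangian2 D L" and "homogeneous D L"
    and "projectable4 D (fundamental_form L)"
  shows "\<forall>p\<in>D. \<forall>\<alpha> \<beta>.
    pd (\<beta>, 2, 0) (pd (\<alpha>, 1, 1) L) p = pd (\<alpha>, 2, 0) (pd (\<beta>, 1, 1) L) p"
proof -
  interpret lag D L
  proof
    show "open D" using assms(1) by (simp add: frame_domain_def)
    show "(\<forall>c. crd_ord c \<le> 2 \<longrightarrow> p c = q c) \<Longrightarrow> p \<in> D \<longleftrightarrow> q \<in> D" for p q
      using assms(1) unfolding frame_domain_def by blast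
    show "lagrangian2 D L" by (rule assms(2))
  qed
  have hom: "\<forall>q\<in>D. lie0 (Dl 1 [1]) L q = L q"
    using assms(3) unfolding homogeneous_def by auto
  have proj: "\<forall>p\<in>D. \<forall>c c'. lie2 (Dl 1 [1]) (fundamental_form L) c c' p = 0"
    using assms(4) unfolding projectable4_def by auto
  show ?thesis
  proof (intro ballI allI)
    fix p \<alpha> \<beta> assume p: "p \<in> D"
    let ?A = "\<lambda>g b. pd (b,2,0) (pd (g,1,1) L) p"
    have F: "-21/32 * ?A g b + 5/32 * ?A b g = 0" for g b
    proof -
      have "pd (b,1,1) (pd (g,2,0) L) p = ?A b g" using schwarz2[OF p] by simp
      then show ?thesis using F_zero[OF hom proj p, of b g] by simp
    qed
    have "?A \<alpha> \<beta> = 0" using F[of \<alpha> \<beta>] F[of \<beta> \<alpha>] by linarith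
    moreover have "?A \<beta> \<alpha> = 0" using F[of \<alpha> \<beta>] F[of \<beta> \<alpha>] by linarith
    ultimately show "pd (\<beta>, 2, 0) (pd (\<alpha>, 1, 1) L) p = pd (\<alpha>, 2, 0) (pd (\<beta>, 1, 1) L) p" by simp
  qed
qed


theorem mainTheorem19:
  fixes D :: "('a::finite) pt set" and L :: "'a fn"
  assumes "frame_domain D" and "lagrangian2 D L" and "homogeneous D L"
    and "projectable4 D (fundamental_form L)"
  shows "\<forall>p\<in>D. \<forall>\<alpha> \<beta>.
    pd (\<beta>, 2, 0) (pd (\<alpha>, 1, 1) L) p = pd (\<alpha>, 2, 0) (pd (\<beta>, 1, 1) L) p"
  using assms by (rule main_aux)

end
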